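(* Let $X$ (treatment) and $Y$ (effect) be binary variables, with values $x,x'$ and $y,y'$ respectively. Suppose we are given $m$ experimental samples and $n$ observational samples, and the experimental quantities $P(y_x),P(y_{x'})$ and the observational quantities $P(y), P(x,y),P(x,y'),P(x',y),P(x',y')$ are estimated by their sample frequencies. Then, for $0<\alpha<1$, the margin of error, in a $1-\alpha$ confidence interval, of each of the (estimated) Tian–Pearl bounds of PNS, $$\max\{0,\;P(y_x)-P(y_{x'}),\;P(y)-P(y_{x'}),\;P(y_x)-P(y)\}\le \mathrm{PNS}\le \min\{P(y_x),\;P(y'_{x'}),\;P(x,y)+P(x',y'),\;P(y_x)-P(y_{x'})+P(x,y')+P(x',y)\},$$ is at most $z_{1-\alpha/2}\left(\sqrt{\tfrac{1}{m}}+\sqrt{\tfrac{1}{n}}\right)$, where $z_{1-\alpha/2}$ is the $1-\alpha/2$ quantile of the standard normal distribution.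
   Context: Counterfactual notation: $y_x$ denotes the event "$Y$ would be $y$ had $X$ been $x$" (i.e. $Y_x=y$), and similarly $y_{x'}$, $y'_x$, $y'_{x'}$. Experimental data yield the causal effects $P(y_x)$, $P(y_{x'})$ (with $P(y'_{x'})=1-P(y_{x'})$); observational data yield the joint probabilities $P(x,y)$ etc. The probability of necessity and sufficiency is $\mathrm{PNS}=P(y_x,y'_{x'})$. For a probability $p$ estimated by the frequency $\hat p$ from $k$ samples (experimental quantities from the $m$ experimental samples, observational quantities from the $n$ observational samples), its margin of error in a $1-\alpha$ confidence interval is the (asymptotic normal) quantity $z_{1-\alpha/2}\sqrt{\hat p(1-\hat p)/k}$, and the margin of error of a sum or difference of such estimates is bounded by the sum of their margins of error. *)

theory Defs
  imports "HOL-Probability.Probability"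
begin

definition std_normal_cdf :: "real \<Rightarrow> real" where
  "std_normal_cdf t = measure (density lborel std_normal_density) {..t}"

definition moe :: "real \<Rightarrow> real \<Rightarrow> nat \<Rightarrow> real" where
  "moe z p k = z * sqrt (p * (1 - p) / real k)"

text \<open>Margin of error of the estimated Tian--Pearl lower bound
  max{0, P(y_x)-P(y_x'), P(y)-P(y_x'), P(y_x)-P(y)}: the bound equals one of the
  terms, whose margin of error is bounded by the sum of the margins of its summands;
  we take the largest of these.\<close>
definition pns_lower_moe ::
  "real \<Rightarrow> nat \<Rightarrow> nat \<Rightarrow> real \<Rightarrow> real \<Rightarrow> real \<Rightarrow> real" where
  "pns_lower_moe z m n pyx pyx' py =
     max 0 (max (moe z pyx m + moe z pyx' m)
                (max (moe z py n + moe z pyx' m) (moe z pyx m + moe z py n)))"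

definition pns_upper_moe ::
  "real \<Rightarrow> nat \<Rightarrow> nat \<Rightarrow> real \<Rightarrow> real \<Rightarrow> real \<Rightarrow> real \<Rightarrow> real \<Rightarrow> real \<Rightarrow> real" where
  "pns_upper_moe z m n pyx pyx' pxy pxy' px'y px'y' =
     max (moe z pyx m)
       (max (moe z (1 - pyx') m)
         (max (moe z pxy n + moe z px'y' n)
              (moe z pyx m + moe z pyx' m + moe z pxy' n + moe z px'y n)))"

end

theory Submission
  imports Defs
begin

lemma sn_refl: "emeasure (density lborel std_normal_density) {..z} = emeasure (density lborel std_normal_density) {-z..}"
proof -
  have "emeasure (density lborel std_normal_density) {..z} = (\<integral>\<^sup>+ x. ennreal (std_normal_density x) * indicator {..z} x \<partial>lborel)"
    by (simp add: emeasure_density)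
  also have "\<dots> = (\<integral>\<^sup>+ x. ennreal (std_normal_density x) * indicator {..z} x \<partial>(distr lborel borel uminus))"
    by (simp add: lborel_distr_uminus)
  also have "\<dots> = (\<integral>\<^sup>+ x. ennreal (std_normal_density (-x)) * indicator {..z} (-x) \<partial>lborel)"
    by (subst nn_integral_distr) auto
  also have "\<dots> = (\<integral>\<^sup>+ x. ennreal (std_normal_density x) * indicator {-z..} x \<partial>lborel)"
    by (intro nn_integral_cong) (auto simp: normal_density_def indicator_def)
  also have "\<dots> = emeasure (density lborel std_normal_density) {-z..}"
    by (simp add: emeasure_density)
  finally show ?thesis .
qed

lemma sn_zero: "emeasure (density lborel std_normal_density) {0::real} = 0"
proof -
  have "{0::real} \<in> null_sets lborel" by (rule countable_imp_null_set_lborel) simp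
  then have "AE x in lborel. x \<notin> {0::real}" by (rule AE_not_in)
  then have "{0::real} \<in> null_sets (density lborel std_normal_density)"
  proof -
    have "AE x in lborel. x \<in> {0::real} \<longrightarrow> std_normal_density x = 0"
      using \<open>AE x in lborel. x \<notin> {0::real}\<close> by eventually_elim auto
    then show ?thesis by (simp add: null_sets_density_iff)
  qed
  then show ?thesis by (rule null_setsD1)
qed

lemma cdf_nonpos: assumes "z \<le> (0::real)" shows "std_normal_cdf z \<le> 1/2"
proof -
  let ?D = "density lborel std_normal_density"
  interpret P: prob_space ?D using prob_space_normal_density by simp
  have r: "measure ?D {..0} = measure ?D {0..}" using sn_refl[of 0] by (simp add: measure_def)
  have z: "measure ?D {0} = 0" using sn_zero by (simp add: measure_def)
  have "{..0::real} = {..<0} \<union> {0}" by auto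
  then have "measure ?D {..0} = measure ?D ({..<0} \<union> {0})" by simp
  also have "\<dots> = measure ?D {..<0} + measure ?D {0}"
    by (rule P.finite_measure_Union) auto
  finally have a: "measure ?D {..0} = measure ?D {..<0}" using z by simp
  have "measure ?D {..<0} + measure ?D {0..} = measure ?D ({..<0} \<union> {0..})"
    by (rule P.finite_measure_Union[symmetric]) auto
  also have "{..<0} \<union> {0..} = (UNIV::real set)" by auto
  also have "measure ?D UNIV = 1" using P.prob_space by simp
  finally have "measure ?D {..0} = 1/2" using a r by simp
  moreover have "measure ?D {..z} \<le> measure ?D {..0}"
    by (rule P.finite_measure_mono) (use assms in auto)
  ultimately show ?thesis by (simp add: std_normal_cdf_def)
qed
lemma moe_le:
  assumes "0 \<le> p" "p \<le> 1" "0 \<le> z" "k > 0"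
  shows "moe z p k \<le> z / 2 * sqrt (1 / real k)"
proof -
  have sq: "0 \<le> (p - 1/2) * (p - 1/2)" by simp
  have "p * (1 - p) \<le> 1/4" using sq by (simp add: algebra_simps)
  hence "p * (1 - p) / real k \<le> (1/4) / real k" using assms by (intro divide_right_mono) auto
  also have "(1/4) / real k = (1/2)^2 * (1 / real k)" by (simp add: power2_eq_square)
  finally have "p * (1 - p) / real k \<le> (1/2)^2 * (1 / real k)" .
  hence "sqrt (p * (1 - p) / real k) \<le> sqrt ((1/2)^2 * (1 / real k))" by (rule real_sqrt_le_mono)
  also have "\<dots> = sqrt ((1/2)^2) * sqrt (1 / real k)" by (rule real_sqrt_mult)
  also have "\<dots> = 1/2 * sqrt (1 / real k)" by (simp only: real_sqrt_abs)
  finally have "sqrt (p * (1 - p) / real k) \<le> 1/2 * sqrt (1 / real k)" .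
  then have "z * sqrt (p * (1 - p) / real k) \<le> z * (1/2 * sqrt (1 / real k))" using assms(3) by (rule mult_left_mono)
  then show ?thesis unfolding moe_def by simp
qed

theorem theorem1:
  fixes m n :: nat and a b :: nat and c11 c10 c01 c00 :: nat
    and \<alpha> z :: real
  assumes "m > 0" and "n > 0"
    and "a \<le> m" and "b \<le> m"
    and "c11 + c10 + c01 + c00 = n"
    and "0 < \<alpha>" and "\<alpha> < 1"
    and "std_normal_cdf z = 1 - \<alpha> / 2"
  shows
    "let pyx = real a / real m; pyx' = real b / real m;
         pxy = real c11 / real n; pxy' = real c10 / real n;
         px'y = real c01 / real n; px'y' = real c00 / real n;
         py = pxy + px'y
     in pns_lower_moe z m n pyx pyx' py \<le> z * (sqrt (1 / real m) + sqrt (1 / real n))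
      \<and> pns_upper_moe z m n pyx pyx' pxy pxy' px'y px'y'
          \<le> z * (sqrt (1 / real m) + sqrt (1 / real n))"
proof -
  have z: "0 \<le> z"
  proof (rule ccontr)
    assume "\<not> 0 \<le> z"
    then have "std_normal_cdf z \<le> 1/2" by (intro cdf_nonpos) simp
    with assms show False by simp
  qed
  define M where "M = z / 2 * sqrt (1 / real m)"
  define N where "N = z / 2 * sqrt (1 / real n)"
  have M0: "0 \<le> M" "0 \<le> N" using z by (simp_all add: M_def N_def)
  have rhs: "z * (sqrt (1 / real m) + sqrt (1 / real n)) = 2 * M + 2 * N"
    by (simp add: M_def N_def algebra_simps)
  have fm: "\<And>c. c \<le> m \<Longrightarrow> moe z (real c / real m) m \<le> M"
    unfolding M_def using assms(1) z by (intro moe_le) auto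
  have fm': "moe z (1 - real b / real m) m \<le> M"
    unfolding M_def using assms(1,4) z by (intro moe_le) auto
  have fn: "\<And>c. c \<le> n \<Longrightarrow> moe z (real c / real n) n \<le> N"
    unfolding N_def using assms(2) z by (intro moe_le) auto
  have fpy: "moe z (real c11 / real n + real c01 / real n) n \<le> N"
  proof -
    have "real c11 / real n + real c01 / real n = real (c11 + c01) / real n" by (simp add: add_divide_distrib)
    moreover have "c11 + c01 \<le> n" using assms(5) by simp
    ultimately show ?thesis using fn by metis
  qed
  have a: "moe z (real a / real m) m \<le> M" using fm assms(3) by blast
  have b: "moe z (real b / real m) m \<le> M" using fm assms(4) by blast
  have c1: "moe z (real c11 / real n) n \<le> N" using fn assms(5) by simp
  have c2: "moe z (real c10 / real n) n \<le> N" using fn assms(5) by simp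
  have c3: "moe z (real c01 / real n) n \<le> N" using fn assms(5) by simp
  have c4: "moe z (real c00 / real n) n \<le> N" using fn assms(5) by simp
  show ?thesis unfolding Let_def pns_lower_moe_def pns_upper_moe_def rhs
    using a b c1 c2 c3 c4 fpy fm' M0 by auto
qed
end
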